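(* Let $G$ be any GP 2 host graph in which every node is marked grey and is not a root, and every edge is unmarked (labels arbitrary; parallel edges and loops allowed). Then the execution of the GP 2 program is-dag on $G$ terminates, and: if $G$ is acyclic, it does not fail and returns a host graph isomorphic to $G$ up to marks; if $G$ contains a directed cycle, it fails. (That is, is-dag is totally correct with respect to this specification.)
   Context: A graph is acyclic if it contains no directed cycle; a loop (edge from a node to itself) counts as a directed cycle. "Isomorphic up to marks" means isomorphic when marks and root status are ignored. GP 2 semantics. Host graphs are finite directed graphs whose nodes and edges carry labels (lists of integers and strings) and marks (nodes: unmarked, red, green, blue, grey; edges: unmarked, red, green, blue, dashed); some nodes are roots. A rule is applied by finding an injective match of its left-hand side compatible with labels and marks (mark "any" matches every mark; roots match roots), satisfying the dangling condition, then changing matched items as prescribed by the right-hand side. Commands: a rule set call $\{r_1,\dots,r_k\}$ applies one applicable rule, failing if none applies; $P;Q$ sequencing; $P!$ iterates $P$ until it fails, returning the graph on which $P$ was last entered (a break inside the body terminates the innermost loop with the current graph); "try $C$ then $P$ else $Q$" runs $C$ and continues with $P$ on its result if it succeeded, else runs $Q$ on the original graph (missing branches do nothing); "if $C$ then $P$ else $Q$" runs $C$ on a copy then $P$ or $Q$ on the original; fail causes failure. The program is-dag (variables of type list; all rules keep labels; rule edges are directed from node 1 to node 2): Main = (init; DFS!; try unroot else break)!; Check DFS = try next_edge then (try {move, ignore} else (set_flag; break)) else (try loop; try back else break) Check = if flag then fail - init: a grey non-root node becomes a red root. - unroot: a red root becomes a blue non-root node. - set_flag: a red root becomes a green root. -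 flag: a green root; no change (test). - next_edge: a red root 1, a node 2 of any mark, an unmarked edge from 1 to 2; the edge becomes red. - ignore: red root 1, blue node 2, red edge from 1 to 2; the edge becomes blue. - move: red root 1, grey node 2, red edge from 1 to 2; node 1 becomes a red non-root, node 2 becomes a red root, the edge becomes dashed. - back: red non-root 1, red root 2, dashed edge from 1 to 2; node 1 becomes a red root, node 2 becomes a blue non-root, the edge becomes blue. - loop: a red root with an unmarked loop; the node becomes a green root, the loop is unchanged. *)

theory Defs
  imports Main
begin

datatype atom = AInt int | AStr string
type_synonym label = "atom list"

datatype nmark = NUnmarked | NRed | NGreen | NBlue | NGrey
datatype emark = EUnmarked | ERed | EGreen | EBlue | EDashed

record ('v, 'e) hgraph =
  V :: "'v set"
  E :: "'e set"
  src :: "'e \<Rightarrow> 'v"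
  tgt :: "'e \<Rightarrow> 'v"
  nlab :: "'v \<Rightarrow> label"
  elab :: "'e \<Rightarrow> label"
  nmark :: "'v \<Rightarrow> nmark"
  emark :: "'e \<Rightarrow> emark"
  root :: "'v \<Rightarrow> bool"

definition wf_hgraph :: "('v, 'e) hgraph \<Rightarrow> bool" where
  "wf_hgraph G \<longleftrightarrow> finite (V G) \<and> finite (E G) \<and>
     (\<forall>e \<in> E G. src G e \<in> V G \<and> tgt G e \<in> V G)"

text \<open>Edge relation; a graph is acyclic iff this relation is acyclic
 (a loop gives a pair (x,x), hence counts as a cycle).\<close>
definition edge_rel :: "('v, 'e) hgraph \<Rightarrow> ('v \<times> 'v) set" where
  "edge_rel G = {(src G e, tgt G e) | e. e \<in> E G}"

definition graph_acyclic :: "('v, 'e) hgraph \<Rightarrow> bool" where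
  "graph_acyclic G \<longleftrightarrow> acyclic (edge_rel G)"

definition iso_upto_marks :: "('v, 'e) hgraph \<Rightarrow> ('w, 'f) hgraph \<Rightarrow> bool" where
  "iso_upto_marks G H \<longleftrightarrow> (\<exists>fV fE.
     bij_betw fV (V G) (V H) \<and> bij_betw fE (E G) (E H) \<and>
     (\<forall>e \<in> E G. src H (fE e) = fV (src G e) \<and> tgt H (fE e) = fV (tgt G e)
                 \<and> elab H (fE e) = elab G e) \<and>
     (\<forall>v \<in> V G. nlab H (fV v) = nlab G v))"

definition setN :: "('v, 'e) hgraph \<Rightarrow> 'v \<Rightarrow> nmark \<Rightarrow> bool \<Rightarrow> ('v, 'e) hgraph" where
  "setN G v m r = G\<lparr>nmark := (nmark G)(v := m), root := (root G)(v := r)\<rparr>"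

definition setE :: "('v, 'e) hgraph \<Rightarrow> 'e \<Rightarrow> emark \<Rightarrow> ('v, 'e) hgraph" where
  "setE G e m = G\<lparr>emark := (emark G)(e := m)\<rparr>"

datatype rule = Init | Unroot | SetFlag | Flag | NextEdge | Ignore | Move | Back | LoopR

text \<open>A root node of a left-hand side must match a root;
 a non-root left-hand-side node may match any node (root status of the host
 node changes only where the rule changes it). Matches are injective, so
 two-node rules need distinct endpoints. No rule deletes anything, so the
 dangling condition holds trivially.\<close>
fun apply_rule :: "rule \<Rightarrow> ('v, 'e) hgraph \<Rightarrow> ('v, 'e) hgraph \<Rightarrow> bool" where
  "apply_rule Init G H \<longleftrightarrow> (\<exists>v \<in> V G. nmark G v = NGrey \<and> H = setN G v NRed True)"
| "apply_rule Unroot G H \<longleftrightarrow>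
     (\<exists>v \<in> V G. nmark G v = NRed \<and> root G v \<and> H = setN G v NBlue False)"
| "apply_rule SetFlag G H \<longleftrightarrow>
     (\<exists>v \<in> V G. nmark G v = NRed \<and> root G v \<and> H = setN G v NGreen True)"
| "apply_rule Flag G H \<longleftrightarrow> (\<exists>v \<in> V G. nmark G v = NGreen \<and> root G v \<and> H = G)"
| "apply_rule NextEdge G H \<longleftrightarrow> (\<exists>e \<in> E G. src G e \<noteq> tgt G e \<and>
     nmark G (src G e) = NRed \<and> root G (src G e) \<and> emark G e = EUnmarked \<and>
     H = setE G e ERed)"
| "apply_rule Ignore G H \<longleftrightarrow> (\<exists>e \<in> E G. src G e \<noteq> tgt G e \<and>
     nmark G (src G e) = NRed \<and> root G (src G e) \<and> nmark G (tgt G e) = NBlue \<and>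
     emark G e = ERed \<and> H = setE G e EBlue)"
| "apply_rule Move G H \<longleftrightarrow> (\<exists>e \<in> E G. src G e \<noteq> tgt G e \<and>
     nmark G (src G e) = NRed \<and> root G (src G e) \<and> nmark G (tgt G e) = NGrey \<and>
     emark G e = ERed \<and>
     H = setE (setN (setN G (src G e) NRed False) (tgt G e) NRed True) e EDashed)"
| "apply_rule Back G H \<longleftrightarrow> (\<exists>e \<in> E G. src G e \<noteq> tgt G e \<and>
     nmark G (src G e) = NRed \<and> nmark G (tgt G e) = NRed \<and> root G (tgt G e) \<and>
     emark G e = EDashed \<and>
     H = setE (setN (setN G (src G e) NRed True) (tgt G e) NBlue False) e EBlue)"
| "apply_rule LoopR G H \<longleftrightarrow> (\<exists>e \<in> E G. src G e = tgt G e \<and>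
     nmark G (src G e) = NRed \<and> root G (src G e) \<and> emark G e = EUnmarked \<and>
     H = setN G (src G e) NGreen True)"

datatype cmd = Call "rule list" | Seq cmd cmd | Alap cmd | Try cmd cmd cmd
  | IfC cmd cmd cmd | Skip | FailC | Break

datatype 'g result = Ok 'g | Failed | Brk 'g

inductive exec :: "cmd \<Rightarrow> ('v, 'e) hgraph \<Rightarrow> ('v, 'e) hgraph result \<Rightarrow> bool" where
  call_ok: "r \<in> set rs \<Longrightarrow> apply_rule r G H \<Longrightarrow> exec (Call rs) G (Ok H)"
| call_fail: "(\<forall>r \<in> set rs. \<forall>H. \<not> apply_rule r G H) \<Longrightarrow> exec (Call rs) G Failed"
| seq_ok: "exec P G (Ok H) \<Longrightarrow> exec Q H res \<Longrightarrow> exec (Seq P Q) G res"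
| seq_fail: "exec P G Failed \<Longrightarrow> exec (Seq P Q) G Failed"
| seq_brk: "exec P G (Brk H) \<Longrightarrow> exec (Seq P Q) G (Brk H)"
| alap_step: "exec P G (Ok H) \<Longrightarrow> exec (Alap P) H res \<Longrightarrow> exec (Alap P) G res"
| alap_fail: "exec P G Failed \<Longrightarrow> exec (Alap P) G (Ok G)"
| alap_brk: "exec P G (Brk H) \<Longrightarrow> exec (Alap P) G (Ok H)"
| try_ok: "exec C G (Ok H) \<Longrightarrow> exec P H res \<Longrightarrow> exec (Try C P Q) G res"
| try_fail: "exec C G Failed \<Longrightarrow> exec Q G res \<Longrightarrow> exec (Try C P Q) G res"
| try_brk: "exec C G (Brk H) \<Longrightarrow> exec (Try C P Q) G (Brk H)"
| if_ok: "exec C G (Ok H) \<Longrightarrow> exec P G res \<Longrightarrow> exec (IfC C P Q) G res"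
| if_brk: "exec C G (Brk H) \<Longrightarrow> exec P G res \<Longrightarrow> exec (IfC C P Q) G res"
| if_fail: "exec C G Failed \<Longrightarrow> exec Q G res \<Longrightarrow> exec (IfC C P Q) G res"
| skip: "exec Skip G (Ok G)"
| fail: "exec FailC G Failed"
| break: "exec Break G (Brk G)"

text \<open>Termination: every execution of the command on the graph is finite
 (least fixed point, so loops can only be iterated finitely often).\<close>
inductive terminates :: "cmd \<Rightarrow> ('v, 'e) hgraph \<Rightarrow> bool" where
  "terminates (Call rs) G"
| "terminates P G \<Longrightarrow> (\<forall>H. exec P G (Ok H) \<longrightarrow> terminates Q H) \<Longrightarrow> terminates (Seq P Q) G"
| "terminates P G \<Longrightarrow> (\<forall>H. exec P G (Ok H) \<longrightarrow> terminates (Alap P) H) \<Longrightarrow> terminates (Alap P) G"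
| "terminates C G \<Longrightarrow> (\<forall>H. exec C G (Ok H) \<longrightarrow> terminates P H) \<Longrightarrow>
     (exec C G Failed \<longrightarrow> terminates Q G) \<Longrightarrow> terminates (Try C P Q) G"
| "terminates C G \<Longrightarrow> ((\<exists>H. exec C G (Ok H) \<or> exec C G (Brk H)) \<longrightarrow> terminates P G) \<Longrightarrow>
     (exec C G Failed \<longrightarrow> terminates Q G) \<Longrightarrow> terminates (IfC C P Q) G"
| "terminates Skip G"
| "terminates FailC G"
| "terminates Break G"

definition DFS :: cmd where
  "DFS = Try (Call [NextEdge])
            (Try (Call [Move, Ignore]) Skip (Seq (Call [SetFlag]) Break))
            (Seq (Try (Call [LoopR]) Skip Skip) (Try (Call [Back]) Skip Break))"

definition Check :: cmd where
  "Check = IfC (Call [Flag]) FailC Skip"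

definition is_dag :: cmd where
  "is_dag = Seq (Alap (Seq (Call [Init]) (Seq (Alap DFS) (Try (Call [Unroot]) Skip Break)))) Check"

definition initial_graph :: "('v, 'e) hgraph \<Rightarrow> bool" where
  "initial_graph G \<longleftrightarrow> wf_hgraph G \<and>
     (\<forall>v \<in> V G. nmark G v = NGrey \<and> \<not> root G v) \<and>
     (\<forall>e \<in> E G. emark G e = EUnmarked)"

end

theory Submission
  imports Defs
begin
definition same :: "('v,'e) hgraph \<Rightarrow> ('v,'e) hgraph \<Rightarrow> bool" where
 "same G H \<longleftrightarrow> V H = V G \<and> E H = E G \<and> src H = src G \<and> tgt H = tgt G \<and> nlab H = nlab G \<and> elab H = elab G"

lemma setN_simps[simp]:
  "V (setN G v m r) = V G" "E (setN G v m r) = E G" "src (setN G v m r) = src G"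
  "tgt (setN G v m r) = tgt G" "nlab (setN G v m r) = nlab G" "elab (setN G v m r) = elab G"
  "nmark (setN G v m r) = (nmark G)(v := m)" "root (setN G v m r) = (root G)(v := r)"
  "emark (setN G v m r) = emark G"
  by (simp_all add: setN_def)

lemma setE_simps[simp]:
  "V (setE G e m) = V G" "E (setE G e m) = E G" "src (setE G e m) = src G"
  "tgt (setE G e m) = tgt G" "nlab (setE G e m) = nlab G" "elab (setE G e m) = elab G"
  "nmark (setE G e m) = nmark G" "root (setE G e m) = root G"
  "emark (setE G e m) = (emark G)(e := m)"
  by (simp_all add: setE_def)

lemma same_refl[simp]: "same G G" by (simp add: same_def)
lemma same_trans: "same G H \<Longrightarrow> same H K \<Longrightarrow> same G K" by (simp add: same_def)

lemma apply_rule_same: "apply_rule r G H \<Longrightarrow> same G H"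
  by (cases r) (auto simp: same_def)

lemma exec_same: "exec c G res \<Longrightarrow> (res = Ok H \<or> res = Brk H) \<Longrightarrow> same G H"
  by (induction arbitrary: H rule: exec.induct) (auto dest: apply_rule_same intro: same_trans)

lemma exec_Call: "exec (Call rs) G res \<longleftrightarrow>
  (\<exists>r\<in>set rs. \<exists>H. apply_rule r G H \<and> res = Ok H) \<or> (res = Failed \<and> (\<forall>r\<in>set rs. \<forall>H. \<not> apply_rule r G H))"
  by (auto elim: exec.cases intro: exec.intros)

lemma exec_Skip: "exec Skip G res \<longleftrightarrow> res = Ok G"
  by (auto elim: exec.cases intro: exec.intros)
lemma exec_Break: "exec Break G res \<longleftrightarrow> res = Brk G"
  by (auto elim: exec.cases intro: exec.intros)
lemma exec_FailC: "exec FailC G res \<longleftrightarrow> res = Failed"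
  by (auto elim: exec.cases intro: exec.intros)
lemma exec_Seq: "exec (Seq P Q) G res \<longleftrightarrow> (\<exists>H. exec P G (Ok H) \<and> exec Q H res) \<or>
   (exec P G Failed \<and> res = Failed) \<or> (\<exists>H. exec P G (Brk H) \<and> res = Brk H)"
  by (auto elim: exec.cases intro: exec.intros)
lemma exec_Try: "exec (Try C P Q) G res \<longleftrightarrow> (\<exists>H. exec C G (Ok H) \<and> exec P H res) \<or>
   (exec C G Failed \<and> exec Q G res) \<or> (\<exists>H. exec C G (Brk H) \<and> res = Brk H)"
  by (auto elim: exec.cases intro: exec.intros)
lemma exec_IfC: "exec (IfC C P Q) G res \<longleftrightarrow> ((\<exists>H. exec C G (Ok H) \<or> exec C G (Brk H)) \<and> exec P G res) \<or>
   (exec C G Failed \<and> exec Q G res)"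
  by (auto elim: exec.cases intro: exec.intros)

lemma exec_exists: "terminates c G \<Longrightarrow> \<exists>res. exec c G res"
proof (induction rule: terminates.induct)
  case (1 rs G)
  then show ?case by (metis exec.call_fail exec.call_ok)
next
  case (2 P G Q)
  then obtain r where r: "exec P G r" by blast
  show ?case
  proof (cases r)
    case (Ok H) with 2 r show ?thesis by (meson exec.seq_ok)
  next
    case Failed with 2 r show ?thesis by (meson exec.seq_fail)
  next
    case (Brk H) with 2 r show ?thesis by (meson exec.seq_brk)
  qed
next
  case (3 P G)
  then obtain r where r: "exec P G r" by blast
  show ?case
  proof (cases r)
    case (Ok H) with 3 r show ?thesis by (meson exec.alap_step)
  next
    case Failed with 3 r show ?thesis by (meson exec.alap_fail)
  next
    case (Brk H) with 3 r show ?thesis by (meson exec.alap_brk)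
  qed
next
  case (4 C G P Q)
  then obtain r where r: "exec C G r" by blast
  show ?case
  proof (cases r)
    case (Ok H) with 4 r show ?thesis by (meson exec.try_ok)
  next
    case Failed with 4 r show ?thesis by (meson exec.try_fail)
  next
    case (Brk H) with 4 r show ?thesis by (meson exec.try_brk)
  qed
next
  case (5 C G P Q)
  then obtain r where r: "exec C G r" by blast
  show ?case
  proof (cases r)
    case (Ok H) with 5 r show ?thesis by (meson exec.if_ok)
  next
    case Failed with 5 r show ?thesis by (meson exec.if_fail)
  next
    case (Brk H) with 5 r show ?thesis by (meson exec.if_brk)
  qed
qed (auto intro: exec.intros)

fun loopfree :: "cmd \<Rightarrow> bool" where
  "loopfree (Alap _) = False"
| "loopfree (Seq P Q) = (loopfree P \<and> loopfree Q)"
| "loopfree (Try C P Q) = (loopfree C \<and> loopfree P \<and> loopfree Q)"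
| "loopfree (IfC C P Q) = (loopfree C \<and> loopfree P \<and> loopfree Q)"
| "loopfree _ = True"

lemma loopfree_term: "loopfree c \<Longrightarrow> terminates c G"
  by (induction c arbitrary: G) (auto intro: terminates.intros)

definition BR :: "('v,'e) hgraph \<Rightarrow> ('v \<times> 'v) set" where
  "BR G = {(src G e, tgt G e) | e. e \<in> E G \<and> nmark G (src G e) = NBlue}"

definition stA :: "('v,'e) hgraph \<Rightarrow> bool" where
 "stA G \<longleftrightarrow> wf_hgraph G \<and>
   (\<forall>v\<in>V G. (nmark G v = NGrey \<or> nmark G v = NBlue) \<and> \<not> root G v) \<and>
   (\<forall>e\<in>E G. emark G e = EUnmarked \<or> emark G e = EBlue) \<and>
   (\<forall>e\<in>E G. src G e = tgt G e \<longrightarrow> emark G e = EUnmarked) \<and>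
   (\<forall>e\<in>E G. emark G e = EBlue \<longrightarrow> nmark G (tgt G e) = NBlue) \<and>
   (\<forall>e\<in>E G. nmark G (src G e) = NBlue \<longrightarrow> nmark G (tgt G e) = NBlue) \<and>
   acyclic (BR G)"

definition stD :: "('v,'e) hgraph \<Rightarrow> 'v list \<Rightarrow> bool" where
 "stD G p \<longleftrightarrow> wf_hgraph G \<and> p \<noteq> [] \<and> distinct p \<and> set p \<subseteq> V G \<and>
   (\<forall>v\<in>V G. nmark G v = NGrey \<or> nmark G v = NRed \<or> nmark G v = NBlue) \<and>
   (\<forall>v\<in>V G. nmark G v = NRed \<longleftrightarrow> v \<in> set p) \<and>
   (\<forall>v\<in>V G. root G v \<longleftrightarrow> v = hd p) \<and>
   (\<forall>e\<in>E G. emark G e = EUnmarked \<or> emark G e = EBlue \<or> emark G e = EDashed) \<and>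
   (\<forall>e\<in>E G. src G e = tgt G e \<longrightarrow> emark G e = EUnmarked) \<and>
   (\<forall>e\<in>E G. emark G e = EBlue \<longrightarrow> nmark G (tgt G e) = NBlue) \<and>
   (\<forall>e\<in>E G. nmark G (src G e) = NBlue \<longrightarrow> nmark G (tgt G e) = NBlue) \<and>
   (\<forall>e\<in>E G. emark G e = EDashed \<longrightarrow> (\<exists>i. Suc i < length p \<and> src G e = p!Suc i \<and> tgt G e = p!i)) \<and>
   (\<forall>e1\<in>E G. \<forall>e2\<in>E G. emark G e1 = EDashed \<longrightarrow> emark G e2 = EDashed \<longrightarrow> tgt G e1 = tgt G e2 \<longrightarrow> e1 = e2) \<and>
   (\<forall>i. Suc i < length p \<longrightarrow> (\<exists>e\<in>E G. emark G e = EDashed \<and> src G e = p!Suc i \<and> tgt G e = p!i)) \<and>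
   acyclic (BR G)"

definition stG :: "('v,'e) hgraph \<Rightarrow> bool" where
 "stG G \<longleftrightarrow> (\<exists>v\<in>V G. nmark G v = NGreen \<and> root G v) \<and> (\<forall>v\<in>V G. root G v \<longrightarrow> nmark G v \<noteq> NRed)
    \<and> \<not> acyclic (edge_rel G)"

lemma acyclic_extend:
  assumes "acyclic r" "u \<notin> Domain r" "u \<notin> Range r" "u \<notin> S"
  shows "acyclic (r \<union> {u} \<times> S)"
proof -
  have claim: "(a,b) \<in> (r \<union> {u} \<times> S)\<^sup>+ \<Longrightarrow> (a,b) \<in> r\<^sup>+ \<or> (a = u \<and> b \<noteq> u)" for a b
  proof (induction rule: trancl_induct)
    case (base y) then show ?case using assms by auto
  next
    case (step y z)
    have "y \<noteq> u" using step.IH assms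
      by (metis Range.intros trancl_range)
    then have "(y,z) \<in> r" using step.hyps(2) by auto
    then show ?case using step.IH assms
      by (metis Range.intros trancl.trancl_into_trancl)
  qed
  show ?thesis unfolding acyclic_def using claim assms(1) unfolding acyclic_def by blast
qed

lemma BR_extend:
  assumes "acyclic (BR G)" "nmark G u \<noteq> NBlue"
    and "\<forall>e\<in>E G. nmark G (src G e) = NBlue \<longrightarrow> nmark G (tgt G e) = NBlue"
    and "\<forall>e\<in>E G. src G e = u \<longrightarrow> nmark G (tgt G e) = NBlue"
    and "E K = E G" "src K = src G" "tgt K = tgt G"
    and "\<forall>v. nmark K v = NBlue \<longrightarrow> v = u \<or> nmark G v = NBlue"
  shows "acyclic (BR K)"
proof -
  let ?S = "{tgt G e | e. e \<in> E G \<and> src G e = u}"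
  have "acyclic (BR G \<union> {u} \<times> ?S)"
  proof (rule acyclic_extend)
    show "u \<notin> Domain (BR G)" using assms(2) by (auto simp: BR_def)
    show "u \<notin> Range (BR G)" using assms(2,3) by (auto simp: BR_def)
    show "u \<notin> ?S" using assms(2,4) by auto
  qed (rule assms(1))
  moreover have "BR K \<subseteq> BR G \<union> {u} \<times> ?S"
    using assms(5-8) unfolding BR_def by fastforce
  ultimately show ?thesis by (rule acyclic_subset)
qed

lemma edge_relI: "e \<in> E G \<Longrightarrow> (src G e, tgt G e) \<in> edge_rel G"
  unfolding edge_rel_def by blast

lemma stD_reach: "stD G p \<Longrightarrow> i < length p \<Longrightarrow> (p!i, hd p) \<in> (edge_rel G)\<^sup>*"
proof (induction i)
  case 0 then show ?case by (simp add: stD_def hd_conv_nth)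
next
  case (Suc i)
  then obtain e where "e \<in> E G" "src G e = p!Suc i" "tgt G e = p!i"
    unfolding stD_def by blast
  then have "(p!Suc i, p!i) \<in> edge_rel G" using edge_relI by metis
  with Suc show ?case by (meson Suc_lessD converse_rtrancl_into_rtrancl)
qed

lemma stD_parts:
  assumes "stD G p"
  shows "wf_hgraph G" "p \<noteq> []" "distinct p" "set p \<subseteq> V G"
   "\<forall>v\<in>V G. nmark G v = NGrey \<or> nmark G v = NRed \<or> nmark G v = NBlue"
   "\<forall>v\<in>V G. nmark G v = NRed \<longleftrightarrow> v \<in> set p"
   "\<forall>v\<in>V G. root G v \<longleftrightarrow> v = hd p"
   "\<forall>e\<in>E G. emark G e = EUnmarked \<or> emark G e = EBlue \<or> emark G e = EDashed"
   "\<forall>e\<in>E G. src G e = tgt G e \<longrightarrow> emark G e = EUnmarked"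
   "\<forall>e\<in>E G. emark G e = EBlue \<longrightarrow> nmark G (tgt G e) = NBlue"
   "\<forall>e\<in>E G. nmark G (src G e) = NBlue \<longrightarrow> nmark G (tgt G e) = NBlue"
   "\<forall>e\<in>E G. emark G e = EDashed \<longrightarrow> (\<exists>i. Suc i < length p \<and> src G e = p!Suc i \<and> tgt G e = p!i)"
   "\<forall>e1\<in>E G. \<forall>e2\<in>E G. emark G e1 = EDashed \<longrightarrow> emark G e2 = EDashed \<longrightarrow> tgt G e1 = tgt G e2 \<longrightarrow> e1 = e2"
   "\<forall>i. Suc i < length p \<longrightarrow> (\<exists>e\<in>E G. emark G e = EDashed \<and> src G e = p!Suc i \<and> tgt G e = p!i)"
   "acyclic (BR G)"
  using assms unfolding stD_def by blast+

lemma stA_parts: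
  assumes "stA G"
  shows "wf_hgraph G"
   "\<forall>v\<in>V G. (nmark G v = NGrey \<or> nmark G v = NBlue) \<and> \<not> root G v"
   "\<forall>e\<in>E G. emark G e = EUnmarked \<or> emark G e = EBlue"
   "\<forall>e\<in>E G. src G e = tgt G e \<longrightarrow> emark G e = EUnmarked"
   "\<forall>e\<in>E G. emark G e = EBlue \<longrightarrow> nmark G (tgt G e) = NBlue"
   "\<forall>e\<in>E G. nmark G (src G e) = NBlue \<longrightarrow> nmark G (tgt G e) = NBlue"
   "acyclic (BR G)"
  using assms unfolding stA_def by blast+

lemma wf_src: "wf_hgraph G \<Longrightarrow> e \<in> E G \<Longrightarrow> src G e \<in> V G"
  and wf_tgt: "wf_hgraph G \<Longrightarrow> e \<in> E G \<Longrightarrow> tgt G e \<in> V G"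
  by (auto simp: wf_hgraph_def)

lemma BR_cong: "E K = E G \<Longrightarrow> src K = src G \<Longrightarrow> tgt K = tgt G \<Longrightarrow>
   (\<forall>e\<in>E G. nmark K (src G e) = NBlue \<longleftrightarrow> nmark G (src G e) = NBlue) \<Longrightarrow> BR K = BR G"
  unfolding BR_def by auto

lemma wf_cong: "wf_hgraph G \<Longrightarrow> V K = V G \<Longrightarrow> E K = E G \<Longrightarrow> src K = src G \<Longrightarrow> tgt K = tgt G \<Longrightarrow> wf_hgraph K"
  by (simp add: wf_hgraph_def)

lemma init_case:
  assumes A: "stA G" and v: "v \<in> V G" "nmark G v = NGrey"
  shows "stD (setN G v NRed True) [v]"
proof -
  note P = stA_parts[OF A]
  have "BR (setN G v NRed True) = BR G"
    by (rule BR_cong) (use v in auto)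
  then show ?thesis using P v unfolding stD_def
    by (auto simp: wf_hgraph_def)
qed

lemma move_case:
  assumes D: "stD G p" and e: "e \<in> E G" "src G e \<noteq> tgt G e" "src G e = hd p"
    "emark G e = EUnmarked" "nmark G (tgt G e) = NGrey"
  shows "stD (setE (setN (setN (setE G e ERed) (src G e) NRed False) (tgt G e) NRed True) e EDashed)
           (tgt G e # p)" (is "stD ?K _")
proof -
  note P = stD_parts[OF D]
  have tV: "tgt G e \<in> V G" by (rule wf_tgt[OF P(1) e(1)])
  have sp: "src G e \<in> set p" using e(3) P(2) by simp
  have tp: "tgt G e \<notin> set p" using P(6) tV e(5) by auto
  have sR: "nmark G (src G e) = NRed" using P(6) sp P(4) by auto
  have nm: "nmark ?K = (nmark G)(src G e := NRed, tgt G e := NRed)" by simp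
  have rt: "root ?K = (root G)(src G e := False, tgt G e := True)" by simp
  have em: "emark ?K = (emark G)(e := EDashed)" by simp
  have BRK: "BR ?K = BR G"
    by (rule BR_cong) (use sR e(5) in auto)
  show ?thesis unfolding stD_def
  proof (intro conjI)
    show "wf_hgraph ?K" using P(1) by (rule wf_cong) simp_all
    show "distinct (tgt G e # p)" using tp P(3) by simp
    show "set (tgt G e # p) \<subseteq> V ?K" using tV P(4) by simp
    show "\<forall>v\<in>V ?K. nmark ?K v = NGrey \<or> nmark ?K v = NRed \<or> nmark ?K v = NBlue"
      using P(5) by (simp only: nm setE_simps setN_simps) auto
    show "\<forall>v\<in>V ?K. nmark ?K v = NRed \<longleftrightarrow> v \<in> set (tgt G e # p)"
      using P(6) sp by (simp only: nm setE_simps setN_simps) auto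
    show "\<forall>v\<in>V ?K. root ?K v \<longleftrightarrow> v = hd (tgt G e # p)"
      using P(7) e(2,3) by (simp only: rt setE_simps setN_simps) auto
    show "\<forall>e\<in>E ?K. emark ?K e = EUnmarked \<or> emark ?K e = EBlue \<or> emark ?K e = EDashed"
      using P(8) by (simp only: em setE_simps setN_simps) auto
    show "\<forall>e'\<in>E ?K. src ?K e' = tgt ?K e' \<longrightarrow> emark ?K e' = EUnmarked"
      using P(9) e(2) by (simp only: em setE_simps setN_simps) auto
    show "\<forall>e'\<in>E ?K. emark ?K e' = EBlue \<longrightarrow> nmark ?K (tgt ?K e') = NBlue"
      using P(10) sR e(5) by (simp only: em nm setE_simps setN_simps) auto
    show "\<forall>e'\<in>E ?K. nmark ?K (src ?K e') = NBlue \<longrightarrow> nmark ?K (tgt ?K e') = NBlue"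
      using P(11) sR e(5) by (simp only: nm setE_simps setN_simps) auto
    show "\<forall>e'\<in>E ?K. emark ?K e' = EDashed \<longrightarrow> (\<exists>i. Suc i < length (tgt G e # p) \<and> src ?K e' = (tgt G e # p)!Suc i \<and> tgt ?K e' = (tgt G e # p)!i)"
    proof (intro ballI impI)
      fix e' assume e': "e' \<in> E ?K" "emark ?K e' = EDashed"
      show "\<exists>i. Suc i < length (tgt G e # p) \<and> src ?K e' = (tgt G e # p)!Suc i \<and> tgt ?K e' = (tgt G e # p)!i"
      proof (cases "e' = e")
        case True then show ?thesis using e(3) P(2)
          by (intro exI[of _ 0]) (simp add: hd_conv_nth)
      next
        case False
        then obtain i where "Suc i < length p" "src G e' = p!Suc i" "tgt G e' = p!i"
          using P(12) e' by auto
        then show ?thesis by (intro exI[of _ "Suc i"]) simp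
      qed
    qed
    show "\<forall>e1\<in>E ?K. \<forall>e2\<in>E ?K. emark ?K e1 = EDashed \<longrightarrow> emark ?K e2 = EDashed \<longrightarrow> tgt ?K e1 = tgt ?K e2 \<longrightarrow> e1 = e2"
    proof (intro ballI impI)
      fix e1 e2 assume e12: "e1 \<in> E ?K" "e2 \<in> E ?K" "emark ?K e1 = EDashed" "emark ?K e2 = EDashed" "tgt ?K e1 = tgt ?K e2"
      have red: "tgt G e' \<noteq> tgt G e" if a: "e' \<noteq> e" "e' \<in> E G" "emark ?K e' = EDashed" for e'
      proof -
        obtain i where "Suc i < length p" "tgt G e' = p!i" using P(12) a by auto
        then show ?thesis using tp by (metis Suc_lessD nth_mem)
      qed
      show "e1 = e2"
      proof (cases "e1 = e \<or> e2 = e")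
        case True then show ?thesis using e12 red[of e1] red[of e2] by (auto split: if_splits)
      next
        case False then show ?thesis using e12 P(13) by auto
      qed
    qed
    show "\<forall>i. Suc i < length (tgt G e # p) \<longrightarrow> (\<exists>e'\<in>E ?K. emark ?K e' = EDashed \<and> src ?K e' = (tgt G e # p)!Suc i \<and> tgt ?K e' = (tgt G e # p)!i)"
    proof (intro allI impI)
      fix i assume i: "Suc i < length (tgt G e # p)"
      show "\<exists>e'\<in>E ?K. emark ?K e' = EDashed \<and> src ?K e' = (tgt G e # p)!Suc i \<and> tgt ?K e' = (tgt G e # p)!i"
      proof (cases i)
        case 0 then show ?thesis using e P(2) by (intro bexI[of _ e]) (auto simp: hd_conv_nth)
      next
        case (Suc j)
        then obtain e' where "e' \<in> E G" "emark G e' = EDashed" "src G e' = p!Suc j" "tgt G e' = p!j"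
          using P(14) i by auto
        moreover then have "e' \<noteq> e" using e(4) by auto
        ultimately show ?thesis using Suc by (intro bexI[of _ e']) auto
      qed
    qed
    show "acyclic (BR ?K)" using BRK P(15) by simp
  qed simp
qed

lemma ignore_case:
  assumes D: "stD G p" and e: "e \<in> E G" "src G e \<noteq> tgt G e" "src G e = hd p"
    "emark G e = EUnmarked" "nmark G (tgt G e) = NBlue"
  shows "stD (setE (setE G e ERed) e EBlue) p" (is "stD ?K _")
proof -
  note P = stD_parts[OF D]
  have em: "emark ?K = (emark G)(e := EBlue)" by simp
  show ?thesis unfolding stD_def
  proof (intro conjI)
    show "wf_hgraph ?K" using P(1) by (rule wf_cong) simp_all
    show "\<forall>e'\<in>E ?K. emark ?K e' = EUnmarked \<or> emark ?K e' = EBlue \<or> emark ?K e' = EDashed"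
      using P(8) by (simp add: em)
    show "\<forall>e'\<in>E ?K. src ?K e' = tgt ?K e' \<longrightarrow> emark ?K e' = EUnmarked"
      using P(9) e(2) by (auto simp add: em)
    show "\<forall>e'\<in>E ?K. emark ?K e' = EBlue \<longrightarrow> nmark ?K (tgt ?K e') = NBlue"
      using P(10) e(5) by (auto simp add: em)
    show "\<forall>e'\<in>E ?K. emark ?K e' = EDashed \<longrightarrow> (\<exists>i. Suc i < length p \<and> src ?K e' = p!Suc i \<and> tgt ?K e' = p!i)"
      using P(12) by (auto simp: em)
    show "\<forall>e1\<in>E ?K. \<forall>e2\<in>E ?K. emark ?K e1 = EDashed \<longrightarrow> emark ?K e2 = EDashed \<longrightarrow> tgt ?K e1 = tgt ?K e2 \<longrightarrow> e1 = e2"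
      using P(13) by (auto simp: em)
    show "\<forall>i. Suc i < length p \<longrightarrow> (\<exists>e'\<in>E ?K. emark ?K e' = EDashed \<and> src ?K e' = p!Suc i \<and> tgt ?K e' = p!i)"
    proof (intro allI impI)
      fix i assume i: "Suc i < length p"
      then obtain e' where e': "e' \<in> E G" "emark G e' = EDashed" "src G e' = p!Suc i" "tgt G e' = p!i"
        using P(14) by blast
      then have "e' \<noteq> e" using e(4) by auto
      then show "\<exists>e'\<in>E ?K. emark ?K e' = EDashed \<and> src ?K e' = p!Suc i \<and> tgt ?K e' = p!i"
        using e' by (intro bexI[of _ e']) auto
    qed
    show "acyclic (BR ?K)" using P(15) by (simp add: BR_def)
  qed (use P in simp_all)
qed

lemma hd_nth_eq: "distinct p \<Longrightarrow> p \<noteq> [] \<Longrightarrow> j < length p \<Longrightarrow> p!j = hd p \<Longrightarrow> j = 0"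
  by (metis hd_conv_nth length_greater_0_conv nth_eq_iff_index_eq)

lemma out_blue:
  assumes D: "stD G p" and e: "e \<in> E G" "src G e = hd p" "emark G e \<noteq> EUnmarked"
  shows "nmark G (tgt G e) = NBlue"
proof -
  note P = stD_parts[OF D]
  have "emark G e \<noteq> EDashed"
  proof
    assume "emark G e = EDashed"
    then obtain i where "Suc i < length p" "src G e = p!Suc i" using P(12) e(1) by blast
    then show False using hd_nth_eq[OF P(3) P(2), of "Suc i"] e(2) by simp
  qed
  then have "emark G e = EBlue" using P(8) e by auto
  then show ?thesis using P(10) e(1) by blast
qed

lemma flag_case:
  assumes D: "stD G p" and e: "e \<in> E G" "src G e \<noteq> tgt G e" "src G e = hd p"
    "nmark G (tgt G e) = NRed"
  shows "stG (setN (setE G e ERed) (hd p) NGreen True)" (is "stG ?K")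
proof -
  note P = stD_parts[OF D]
  have hV: "hd p \<in> V G" using P(2,4) by auto
  have tV: "tgt G e \<in> V G" by (rule wf_tgt[OF P(1) e(1)])
  then have "tgt G e \<in> set p" using P(6) e(4) by auto
  then obtain i where i: "i < length p" "p!i = tgt G e" by (metis in_set_conv_nth)
  have "(tgt G e, hd p) \<in> (edge_rel G)\<^sup>*" using stD_reach[OF D i(1)] i(2) by simp
  moreover have "(hd p, tgt G e) \<in> edge_rel G" using edge_relI[OF e(1)] e(3) by simp
  ultimately have "(hd p, hd p) \<in> (edge_rel G)\<^sup>+" by auto
  moreover have "edge_rel ?K = edge_rel G" by (simp add: edge_rel_def)
  ultimately have "\<not> acyclic (edge_rel ?K)" unfolding acyclic_def by metis
  then show ?thesis unfolding stG_def using hV P(7) by auto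
qed

lemma loop_case:
  assumes D: "stD G p" and e: "e \<in> E G" "src G e = tgt G e" "src G e = hd p"
  shows "stG (setN G (hd p) NGreen True)" (is "stG ?K")
proof -
  note P = stD_parts[OF D]
  have hV: "hd p \<in> V G" using P(2,4) by auto
  have "(hd p, hd p) \<in> edge_rel G" using edge_relI[OF e(1)] e(2,3) by simp
  moreover have "edge_rel ?K = edge_rel G" by (simp add: edge_rel_def)
  ultimately have "\<not> acyclic (edge_rel ?K)" by (auto simp add: acyclic_def)
  then show ?thesis unfolding stG_def using hV P(7) by auto
qed

lemma unroot_case:
  assumes D: "stD G [u]" and out: "\<forall>e\<in>E G. src G e = u \<longrightarrow> emark G e \<noteq> EUnmarked"
  shows "stA (setN G u NBlue False)" (is "stA ?K")
proof -
  note P = stD_parts[OF D]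
  have uR: "nmark G u = NRed" using P(4,6) by auto
  have ob: "e \<in> E G \<Longrightarrow> src G e = u \<Longrightarrow> nmark G (tgt G e) = NBlue" for e
    using out_blue[OF D, of e] out by auto
  have nd: "e \<in> E G \<Longrightarrow> emark G e \<noteq> EDashed" for e using P(12) by auto
  have BRK: "acyclic (BR ?K)"
  proof (rule BR_extend[of G u])
    show "\<forall>v. nmark ?K v = NBlue \<longrightarrow> v = u \<or> nmark G v = NBlue" by simp
  qed (use P uR ob in auto)
  show ?thesis unfolding stA_def
  proof (intro conjI)
    show "wf_hgraph ?K" using P(1) by (rule wf_cong) simp_all
    show "\<forall>v\<in>V ?K. (nmark ?K v = NGrey \<or> nmark ?K v = NBlue) \<and> \<not> root ?K v"
      using P(5,6,7) by auto
    show "\<forall>e\<in>E ?K. emark ?K e = EUnmarked \<or> emark ?K e = EBlue"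
      using P(8) nd by auto
    show "\<forall>e\<in>E ?K. src ?K e = tgt ?K e \<longrightarrow> emark ?K e = EUnmarked"
      using P(9) by auto
    show "\<forall>e\<in>E ?K. emark ?K e = EBlue \<longrightarrow> nmark ?K (tgt ?K e) = NBlue"
      using P(10) uR by auto
    show "\<forall>e\<in>E ?K. nmark ?K (src ?K e) = NBlue \<longrightarrow> nmark ?K (tgt ?K e) = NBlue"
      using P(11) uR ob by (auto; metis nmark.distinct)
  qed (rule BRK)
qed

lemma back_case:
  assumes D: "stD G p" and e: "e \<in> E G" "emark G e = EDashed" "tgt G e = hd p"
    and out: "\<forall>e'\<in>E G. src G e' = hd p \<longrightarrow> emark G e' \<noteq> EUnmarked"
  shows "tl p \<noteq> [] \<and> src G e = hd (tl p) \<and>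
    stD (setE (setN (setN G (src G e) NRed True) (tgt G e) NBlue False) e EBlue) (tl p)"
proof -
  note P = stD_parts[OF D]
  obtain i where i: "Suc i < length p" "src G e = p!Suc i" "tgt G e = p!i" using P(12) e(1,2) by blast
  have i0: "i = 0" using hd_nth_eq[OF P(3) P(2), of i] i e(3) by simp
  obtain t q where pq: "p = t # q" using P(2) by (cases p) auto
  have qne: "q \<noteq> []" using i i0 pq by auto
  have s: "src G e = hd q" using i i0 pq qne by (simp add: hd_conv_nth)
  have t: "tgt G e = t" using e(3) pq by simp
  have tq: "t \<notin> set q" using P(3) pq by simp
  have sq: "hd q \<in> set q" using qne by simp
  have dq: "distinct q" using P(3) pq by simp
  have tV: "t \<in> V G" using P(4) pq by simp
  have sV: "hd q \<in> V G" using P(4) pq sq by auto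
  have tR: "nmark G t = NRed" using P(6) tV pq by simp
  have sR: "nmark G (hd q) = NRed" using P(6) sV pq sq by simp
  have st: "hd q \<noteq> t" using tq sq by auto
  have ob: "e' \<in> E G \<Longrightarrow> src G e' = t \<Longrightarrow> nmark G (tgt G e') = NBlue" for e'
    using out_blue[OF D, of e'] out pq by auto
  let ?K = "setE (setN (setN G (hd q) NRed True) t NBlue False) e EBlue"
  have K: "setE (setN (setN G (src G e) NRed True) (tgt G e) NBlue False) e EBlue = ?K"
    using s t by simp
  have nm: "nmark ?K = (nmark G)(hd q := NRed, t := NBlue)" by simp
  have rt: "root ?K = (root G)(hd q := True, t := False)" by simp
  have em: "emark ?K = (emark G)(e := EBlue)" by simp
  have dash_other: "e' \<in> E G \<Longrightarrow> emark G e' = EDashed \<Longrightarrow> e' \<noteq> e \<Longrightarrow>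
      \<exists>j. Suc j < length q \<and> src G e' = q!Suc j \<and> tgt G e' = q!j" for e'
  proof -
    assume a: "e' \<in> E G" "emark G e' = EDashed" "e' \<noteq> e"
    then obtain k where k: "Suc k < length p" "src G e' = p!Suc k" "tgt G e' = p!k" using P(12) by blast
    have "k \<noteq> 0" using k a P(13) e(1,2) e(3) pq t by (metis nth_Cons_0)
    then obtain j where "k = Suc j" by (cases k) auto
    then show ?thesis using k pq by (intro exI[of _ j]) auto
  qed
  have "stD ?K q" unfolding stD_def
  proof (intro conjI)
    show "wf_hgraph ?K" using P(1) by (rule wf_cong) simp_all
    show "q \<noteq> []" by (rule qne)
    show "distinct q" by (rule dq)
    show "set q \<subseteq> V ?K" using P(4) pq by simp
    show "\<forall>v\<in>V ?K. nmark ?K v = NGrey \<or> nmark ?K v = NRed \<or> nmark ?K v = NBlue"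
      using P(5) by (simp only: nm setE_simps setN_simps) auto
    show "\<forall>v\<in>V ?K. nmark ?K v = NRed \<longleftrightarrow> v \<in> set q"
      using P(6) sq tq pq by (simp only: nm setE_simps setN_simps) auto
    show "\<forall>v\<in>V ?K. root ?K v \<longleftrightarrow> v = hd q"
      using P(7) st pq by (simp only: rt setE_simps setN_simps) auto
    show "\<forall>e'\<in>E ?K. emark ?K e' = EUnmarked \<or> emark ?K e' = EBlue \<or> emark ?K e' = EDashed"
      using P(8) by (simp only: em setE_simps setN_simps) auto
    show "\<forall>e'\<in>E ?K. src ?K e' = tgt ?K e' \<longrightarrow> emark ?K e' = EUnmarked"
      using P(9) e(2) by (simp only: em setE_simps setN_simps) auto
    show "\<forall>e'\<in>E ?K. emark ?K e' = EBlue \<longrightarrow> nmark ?K (tgt ?K e') = NBlue"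
      using P(10) sR tR t by (simp only: em nm setE_simps setN_simps) auto
    show "\<forall>e'\<in>E ?K. nmark ?K (src ?K e') = NBlue \<longrightarrow> nmark ?K (tgt ?K e') = NBlue"
    proof (intro ballI impI)
      fix e' assume a: "e' \<in> E ?K" "nmark ?K (src ?K e') = NBlue"
      then have "src G e' = t \<or> nmark G (src G e') = NBlue" by (auto split: if_splits)
      then have "nmark G (tgt G e') = NBlue" using ob P(11) a by auto
      then show "nmark ?K (tgt ?K e') = NBlue" using sR tR by auto
    qed
    show "\<forall>e'\<in>E ?K. emark ?K e' = EDashed \<longrightarrow> (\<exists>j. Suc j < length q \<and> src ?K e' = q!Suc j \<and> tgt ?K e' = q!j)"
      using dash_other by auto
    show "\<forall>e1\<in>E ?K. \<forall>e2\<in>E ?K. emark ?K e1 = EDashed \<longrightarrow> emark ?K e2 = EDashed \<longrightarrow> tgt ?K e1 = tgt ?K e2 \<longrightarrow> e1 = e2"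
      using P(13) by (simp only: em setE_simps setN_simps) (auto split: if_splits)
    show "\<forall>j. Suc j < length q \<longrightarrow> (\<exists>e'\<in>E ?K. emark ?K e' = EDashed \<and> src ?K e' = q!Suc j \<and> tgt ?K e' = q!j)"
    proof (intro allI impI)
      fix j assume j: "Suc j < length q"
      then obtain e' where e': "e' \<in> E G" "emark G e' = EDashed" "src G e' = p!Suc (Suc j)" "tgt G e' = p!Suc j"
        using P(14) pq by fastforce
      have "p!Suc j \<noteq> t" using j pq tq by (metis Suc_lessD nth_Cons_Suc nth_mem)
      then have "e' \<noteq> e" using e' t by auto
      then show "\<exists>e'\<in>E ?K. emark ?K e' = EDashed \<and> src ?K e' = q!Suc j \<and> tgt ?K e' = q!j"
        using e' pq by (intro bexI[of _ e']) auto
    qed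
    show "acyclic (BR ?K)"
    proof (rule BR_extend[of G t])
      show "\<forall>v. nmark ?K v = NBlue \<longrightarrow> v = t \<or> nmark G v = NBlue" using sR by simp
    qed (use P tR ob in auto)
  qed
  then show ?thesis using qne s pq K by simp
qed

lemma nextedge_app:
  assumes D: "stD G p" and a: "apply_rule NextEdge G H"
  shows "\<exists>e\<in>E G. src G e \<noteq> tgt G e \<and> src G e = hd p \<and> emark G e = EUnmarked \<and> H = setE G e ERed"
proof -
  note P = stD_parts[OF D]
  from a obtain e where e: "e \<in> E G" "src G e \<noteq> tgt G e" "root G (src G e)" "emark G e = EUnmarked" "H = setE G e ERed"
    by auto
  have "src G e \<in> V G" by (rule wf_src[OF P(1) e(1)])
  then have "src G e = hd p" using P(7) e(3) by auto
  then show ?thesis using e by blast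
qed

lemma nextedge_none:
  assumes D: "stD G p" and a: "\<forall>H. \<not> apply_rule NextEdge G H"
  shows "\<forall>e\<in>E G. src G e = hd p \<longrightarrow> src G e \<noteq> tgt G e \<longrightarrow> emark G e \<noteq> EUnmarked"
proof -
  note P = stD_parts[OF D]
  have hV: "hd p \<in> V G" using P(2,4) by auto
  have "nmark G (hd p) = NRed" "root G (hd p)" using P(6,7) hV P(2) by auto
  show ?thesis
  proof (intro ballI impI notI)
    fix e assume "e \<in> E G" "src G e = hd p" "src G e \<noteq> tgt G e" "emark G e = EUnmarked"
    then have "apply_rule NextEdge G (setE G e ERed)" using \<open>nmark G (hd p) = NRed\<close> \<open>root G (hd p)\<close>
      unfolding apply_rule.simps by (intro bexI[of _ e]) auto
    then show False using a by blast
  qed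
qed

lemma move_app:
  assumes D: "stD G p" and e: "e \<in> E G" and a: "apply_rule Move (setE G e ERed) K"
  shows "nmark G (tgt G e) = NGrey \<and>
     K = setE (setN (setN (setE G e ERed) (src G e) NRed False) (tgt G e) NRed True) e EDashed"
proof -
  note P = stD_parts[OF D]
  let ?H = "setE G e ERed"
  from a obtain e' where e': "e' \<in> E ?H" "nmark ?H (tgt ?H e') = NGrey" "emark ?H e' = ERed"
    "K = setE (setN (setN ?H (src ?H e') NRed False) (tgt ?H e') NRed True) e' EDashed"
    by (simp only: apply_rule.simps) blast
  have "e' = e" using e'(1,3) P(8) by (auto split: if_splits)
  moreover have "nmark G (tgt G e') = NGrey" using e'(2) by simp
  ultimately show ?thesis using e'(4) by simp
qed

lemma ignore_app:
  assumes D: "stD G p" and e: "e \<in> E G" and a: "apply_rule Ignore (setE G e ERed) K"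
  shows "nmark G (tgt G e) = NBlue \<and> K = setE (setE G e ERed) e EBlue"
proof -
  note P = stD_parts[OF D]
  let ?H = "setE G e ERed"
  from a obtain e' where e': "e' \<in> E ?H" "nmark ?H (tgt ?H e') = NBlue" "emark ?H e' = ERed"
    "K = setE ?H e' EBlue"
    by (simp only: apply_rule.simps) blast
  have "e' = e" using e'(1,3) P(8) by (auto split: if_splits)
  moreover have "nmark G (tgt G e') = NBlue" using e'(2) by simp
  ultimately show ?thesis using e'(4) by simp
qed

lemma moveign_none:
  assumes D: "stD G p" and e: "e \<in> E G" "src G e \<noteq> tgt G e" "src G e = hd p" "emark G e = EUnmarked"
    and nm: "\<forall>K. \<not> apply_rule Move (setE G e ERed) K" and ni: "\<forall>K. \<not> apply_rule Ignore (setE G e ERed) K"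
  shows "nmark G (tgt G e) = NRed"
proof -
  note P = stD_parts[OF D]
  have hV: "hd p \<in> V G" using P(2,4) by auto
  have hR: "nmark G (hd p) = NRed" "root G (hd p)" using P(6,7) hV P(2) by auto
  have tV: "tgt G e \<in> V G" by (rule wf_tgt[OF P(1) e(1)])
  have "nmark G (tgt G e) \<noteq> NGrey"
  proof
    assume g: "nmark G (tgt G e) = NGrey"
    have "apply_rule Move (setE G e ERed)
      (setE (setN (setN (setE G e ERed) (src G e) NRed False) (tgt G e) NRed True) e EDashed)"
      unfolding apply_rule.simps using e hR g by (intro bexI[of _ e]) auto
    then show False using nm by blast
  qed
  moreover have "nmark G (tgt G e) \<noteq> NBlue"
  proof
    assume g: "nmark G (tgt G e) = NBlue"
    have "apply_rule Ignore (setE G e ERed) (setE (setE G e ERed) e EBlue)"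
      unfolding apply_rule.simps using e hR g by (intro bexI[of _ e]) auto
    then show False using ni by blast
  qed
  ultimately show ?thesis using P(5) tV by blast
qed

lemma setflag_app:
  assumes D: "stD G p" and a: "apply_rule SetFlag (setE G e ERed) K"
  shows "K = setN (setE G e ERed) (hd p) NGreen True"
proof -
  note P = stD_parts[OF D]
  from a obtain v where "v \<in> V G" "root G v" "K = setN (setE G e ERed) v NGreen True" by auto
  then show ?thesis using P(7) by auto
qed

lemma setflag_ex:
  assumes D: "stD G p"
  shows "apply_rule SetFlag (setE G e ERed) (setN (setE G e ERed) (hd p) NGreen True)"
proof -
  note P = stD_parts[OF D]
  have hV: "hd p \<in> V G" using P(2,4) by auto
  have hR: "nmark G (hd p) = NRed" "root G (hd p)" using P(6,7) hV P(2) by auto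
  show ?thesis using hV hR by auto
qed

lemma loop_app:
  assumes D: "stD G p" and a: "apply_rule LoopR G K"
  shows "\<exists>e\<in>E G. src G e = tgt G e \<and> src G e = hd p \<and> K = setN G (hd p) NGreen True"
proof -
  note P = stD_parts[OF D]
  from a obtain e where e: "e \<in> E G" "src G e = tgt G e" "root G (src G e)" "K = setN G (src G e) NGreen True"
    by auto
  have "src G e \<in> V G" by (rule wf_src[OF P(1) e(1)])
  then have "src G e = hd p" using P(7) e(3) by auto
  then show ?thesis using e by (intro bexI[of _ e]) auto
qed

lemma loop_none:
  assumes D: "stD G p" and a: "\<forall>K. \<not> apply_rule LoopR G K"
  shows "\<forall>e\<in>E G. src G e = hd p \<longrightarrow> src G e = tgt G e \<longrightarrow> emark G e \<noteq> EUnmarked"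
proof -
  note P = stD_parts[OF D]
  have hV: "hd p \<in> V G" using P(2,4) by auto
  have hR: "nmark G (hd p) = NRed" "root G (hd p)" using P(6,7) hV P(2) by auto
  show ?thesis
  proof (intro ballI impI notI)
    fix e assume "e \<in> E G" "src G e = hd p" "src G e = tgt G e" "emark G e = EUnmarked"
    then have "apply_rule LoopR G (setN G (src G e) NGreen True)" using hR
      unfolding apply_rule.simps by (intro bexI[of _ e]) auto
    then show False using a by blast
  qed
qed

lemma back_green_none:
  assumes D: "stD G p"
  shows "\<not> apply_rule Back (setN G (hd p) NGreen True) K"
proof
  note P = stD_parts[OF D]
  assume "apply_rule Back (setN G (hd p) NGreen True) K"
  then obtain e where e: "e \<in> E G" "nmark (setN G (hd p) NGreen True) (tgt G e) = NRed"
     "root (setN G (hd p) NGreen True) (tgt G e)" by auto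
  have "tgt G e \<in> V G" by (rule wf_tgt[OF P(1) e(1)])
  then show False using e P(7) by (auto split: if_splits)
qed

lemma back_app:
  assumes D: "stD G p" and a: "apply_rule Back G K"
  shows "\<exists>e\<in>E G. emark G e = EDashed \<and> tgt G e = hd p \<and>
     K = setE (setN (setN G (src G e) NRed True) (tgt G e) NBlue False) e EBlue"
proof -
  note P = stD_parts[OF D]
  from a obtain e where e: "e \<in> E G" "root G (tgt G e)" "emark G e = EDashed"
     "K = setE (setN (setN G (src G e) NRed True) (tgt G e) NBlue False) e EBlue" by auto
  have "tgt G e \<in> V G" by (rule wf_tgt[OF P(1) e(1)])
  then have "tgt G e = hd p" using P(7) e(2) by auto
  then show ?thesis using e by auto
qed

lemma back_none:
  assumes D: "stD G p" and a: "\<forall>K. \<not> apply_rule Back G K"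
  shows "tl p = []"
proof (rule ccontr)
  note P = stD_parts[OF D]
  assume "tl p \<noteq> []"
  then have l: "Suc 0 < length p" using P(2) by (cases p) auto
  then obtain e where e: "e \<in> E G" "emark G e = EDashed" "src G e = p!Suc 0" "tgt G e = p!0"
    using P(14) by blast
  have "p!Suc 0 \<noteq> p!0" using P(3) l by (metis Suc_lessD nat.distinct(1) nth_eq_iff_index_eq)
  moreover have "p!Suc 0 \<in> set p" "p!0 \<in> set p" using l by (auto intro: nth_mem)
  moreover have "p!0 = hd p" using P(2) by (simp add: hd_conv_nth)
  moreover have "hd p \<in> V G" using P(2,4) by auto
  ultimately have "apply_rule Back G (setE (setN (setN G (src G e) NRed True) (tgt G e) NBlue False) e EBlue)"
    using e P(4,6,7) unfolding apply_rule.simps by (intro bexI[of _ e]) auto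
  then show False using a by blast
qed

lemma unroot_app:
  assumes D: "stD G [u]" and a: "apply_rule Unroot G K"
  shows "K = setN G u NBlue False"
proof -
  note P = stD_parts[OF D]
  from a obtain v where "v \<in> V G" "root G v" "K = setN G v NBlue False" by auto
  then show ?thesis using P(7) by auto
qed

lemma unroot_ex:
  assumes D: "stD G [u]"
  shows "apply_rule Unroot G (setN G u NBlue False)"
proof -
  note P = stD_parts[OF D]
  show ?thesis using P(4,6,7) by auto
qed

lemma unroot_green: "stG G \<Longrightarrow> \<not> apply_rule Unroot G K"
  unfolding stG_def by auto

lemma init_app: "stA G \<Longrightarrow> apply_rule Init G K \<Longrightarrow> \<exists>v\<in>V G. nmark G v = NGrey \<and> K = setN G v NRed True"
  by auto

lemma flag_green: "stG G \<Longrightarrow> apply_rule Flag G G"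
  unfolding stG_def by auto

lemma flag_A: "stA G \<Longrightarrow> \<not> apply_rule Flag G K"
  unfolding stA_def by auto

definition unm :: "('v,'e) hgraph \<Rightarrow> 'e set" where "unm G = {e\<in>E G. emark G e = EUnmarked}"
definition nbl :: "('v,'e) hgraph \<Rightarrow> 'v set" where "nbl G = {v\<in>V G. nmark G v \<noteq> NBlue}"
definition gry :: "('v,'e) hgraph \<Rightarrow> 'v set" where "gry G = {v\<in>V G. nmark G v = NGrey}"
definition meas :: "('v,'e) hgraph \<Rightarrow> nat" where "meas G = card (unm G) + card (nbl G) + card (gry G)"

lemma meas_lt:
  assumes wf: "wf_hgraph G" and "unm K \<subseteq> unm G" "nbl K \<subseteq> nbl G" "gry K \<subseteq> gry G"
    and strict: "unm K \<noteq> unm G \<or> nbl K \<noteq> nbl G \<or> gry K \<noteq> gry G"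
  shows "meas K < meas G"
proof -
  have f: "finite (unm G)" "finite (nbl G)" "finite (gry G)"
    using wf unfolding wf_hgraph_def unm_def nbl_def gry_def by auto
  have "card (unm K) \<le> card (unm G)" "card (nbl K) \<le> card (nbl G)" "card (gry K) \<le> card (gry G)"
    using f assms(2-4) by (auto intro: card_mono)
  moreover have "card (unm K) < card (unm G) \<or> card (nbl K) < card (nbl G) \<or> card (gry K) < card (gry G)"
    using strict f assms(2-4) by (meson psubsetI psubset_card_mono)
  ultimately show ?thesis unfolding meas_def by linarith
qed

lemma meas_move:
  assumes D: "stD G p" and e: "e \<in> E G" "src G e \<noteq> tgt G e" "src G e = hd p"
    "emark G e = EUnmarked" "nmark G (tgt G e) = NGrey"
    and K: "K = setE (setN (setN (setE G e ERed) (src G e) NRed False) (tgt G e) NRed True) e EDashed"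
  shows "meas K < meas G \<and> gry K \<subseteq> gry G"
proof -
  note P = stD_parts[OF D]
  have hV: "hd p \<in> V G" using P(2,4) by auto
  have sR: "nmark G (src G e) = NRed" using P(2,6) hV e(3) by auto
  have tV: "tgt G e \<in> V G" by (rule wf_tgt[OF P(1) e(1)])
  have g: "gry K \<subseteq> gry G" using K e(2) unfolding gry_def by auto
  have "meas K < meas G"
  proof (rule meas_lt[OF P(1)])
    show "unm K \<subseteq> unm G" using K unfolding unm_def by auto
    show "nbl K \<subseteq> nbl G" using K sR e(5) unfolding nbl_def by auto
    show "gry K \<subseteq> gry G" by (rule g)
    have "tgt G e \<in> gry G" "tgt G e \<notin> gry K" using K tV e(5) unfolding gry_def by auto
    then show "unm K \<noteq> unm G \<or> nbl K \<noteq> nbl G \<or> gry K \<noteq> gry G" by blast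
  qed
  with g show ?thesis by blast
qed

lemma meas_ignore:
  assumes D: "stD G p" and e: "e \<in> E G" "emark G e = EUnmarked"
    and K: "K = setE (setE G e ERed) e EBlue"
  shows "meas K < meas G \<and> gry K \<subseteq> gry G"
proof -
  note P = stD_parts[OF D]
  have g: "gry K \<subseteq> gry G" using K unfolding gry_def by auto
  have "meas K < meas G"
  proof (rule meas_lt[OF P(1)])
    show "unm K \<subseteq> unm G" using K unfolding unm_def by auto
    show "nbl K \<subseteq> nbl G" using K unfolding nbl_def by auto
    show "gry K \<subseteq> gry G" by (rule g)
    have "e \<in> unm G" "e \<notin> unm K" using K e unfolding unm_def by auto
    then show "unm K \<noteq> unm G \<or> nbl K \<noteq> nbl G \<or> gry K \<noteq> gry G" by blast
  qed
  with g show ?thesis by blast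
qed

lemma meas_back:
  assumes D: "stD G p" and e: "e \<in> E G" "emark G e = EDashed" "tgt G e = hd p" "src G e \<in> set p"
    and K: "K = setE (setN (setN G (src G e) NRed True) (tgt G e) NBlue False) e EBlue"
  shows "meas K < meas G \<and> gry K \<subseteq> gry G"
proof -
  note P = stD_parts[OF D]
  have sR: "nmark G (src G e) = NRed" using P(4,6) e(4) by auto
  have hV: "hd p \<in> V G" using P(2,4) by auto
  have tR: "nmark G (tgt G e) = NRed" using P(2,6) hV e(3) by auto
  have g: "gry K \<subseteq> gry G" using K sR tR unfolding gry_def by auto
  have "meas K < meas G"
  proof (rule meas_lt[OF P(1)])
    show "unm K \<subseteq> unm G" using K e(2) unfolding unm_def by auto
    show "nbl K \<subseteq> nbl G" using K sR unfolding nbl_def by auto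
    show "gry K \<subseteq> gry G" by (rule g)
    have "tgt G e \<in> nbl G" "tgt G e \<notin> nbl K" using K tR hV e(3) unfolding nbl_def by auto
    then show "unm K \<noteq> unm G \<or> nbl K \<noteq> nbl G \<or> gry K \<noteq> gry G" by blast
  qed
  with g show ?thesis by blast
qed

lemma gry_green: "nmark G v = NRed \<Longrightarrow> gry (setN G v NGreen True) = gry G"
  and gry_green2: "nmark G v = NRed \<Longrightarrow> gry (setN (setE G e m) v NGreen True) = gry G"
  unfolding gry_def by auto

lemma call_no_brk: "\<not> exec (Call rs) G (Brk H)"
  by (simp add: exec_Call)

declare apply_rule.simps[simp del]

definition done_at :: "('v,'e) hgraph \<Rightarrow> 'v \<Rightarrow> bool" where
  "done_at H u \<longleftrightarrow> (\<forall>e\<in>E H. src H e = u \<longrightarrow> emark H e \<noteq> EUnmarked)"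

lemma try_call_skip: "exec (Try (Call rs) Skip Skip) G r \<Longrightarrow> \<exists>H. r = Ok H"
  unfolding exec_Try exec_Skip using call_no_brk by blast

lemma dfs_step:
  assumes D: "stD G p" and X: "exec DFS G res"
  shows "(\<exists>H p'. res = Ok H \<and> stD H p' \<and> meas H < meas G \<and> gry H \<subseteq> gry G) \<or>
         (\<exists>H. res = Brk H \<and> gry H \<subseteq> gry G \<and> (stG H \<or> (\<exists>u. stD H [u] \<and> done_at H u)))"
proof -
  note P = stD_parts[OF D]
  have hV: "hd p \<in> V G" using P(2,4) by auto
  have hR: "nmark G (hd p) = NRed" using P(2,6) hV by auto
  let ?X = "Try (Call [Move, Ignore]) Skip (Seq (Call [SetFlag]) Break)"
  let ?Y = "Seq (Try (Call [LoopR]) Skip Skip) (Try (Call [Back]) Skip Break)"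
  from X have "(\<exists>H. exec (Call [NextEdge]) G (Ok H) \<and> exec ?X H res) \<or>
      (exec (Call [NextEdge]) G Failed \<and> exec ?Y G res)"
    unfolding DFS_def exec_Try using call_no_brk by blast
  then show ?thesis
  proof
    assume "\<exists>H. exec (Call [NextEdge]) G (Ok H) \<and> exec ?X H res"
    then obtain H1 where H1: "apply_rule NextEdge G H1" "exec ?X H1 res" by (auto simp: exec_Call)
    then obtain e where e: "e \<in> E G" "src G e \<noteq> tgt G e" "src G e = hd p" "emark G e = EUnmarked"
      and H1e: "H1 = setE G e ERed" using nextedge_app[OF D] by blast
    from H1(2) have "(\<exists>K. exec (Call [Move, Ignore]) H1 (Ok K) \<and> res = Ok K) \<or>
       (exec (Call [Move, Ignore]) H1 Failed \<and> exec (Seq (Call [SetFlag]) Break) H1 res)"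
      unfolding exec_Try exec_Skip using call_no_brk by blast
    then show ?thesis
    proof
      assume "\<exists>K. exec (Call [Move, Ignore]) H1 (Ok K) \<and> res = Ok K"
      then obtain K where K: "apply_rule Move H1 K \<or> apply_rule Ignore H1 K" "res = Ok K"
        by (auto simp: exec_Call)
      from K(1) show ?thesis
      proof
        assume "apply_rule Move H1 K"
        then have m: "nmark G (tgt G e) = NGrey"
          "K = setE (setN (setN (setE G e ERed) (src G e) NRed False) (tgt G e) NRed True) e EDashed"
          using move_app[OF D e(1)] H1e by auto
        have "stD K (tgt G e # p)" using move_case[OF D e m(1)] m(2) by simp
        moreover have "meas K < meas G \<and> gry K \<subseteq> gry G" by (rule meas_move[OF D e m])
        ultimately show ?thesis using K(2) by blast
      next
        assume "apply_rule Ignore H1 K"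
        then have m: "nmark G (tgt G e) = NBlue" "K = setE (setE G e ERed) e EBlue"
          using ignore_app[OF D e(1)] H1e by auto
        have "stD K p" using ignore_case[OF D e m(1)] m(2) by simp
        moreover have "meas K < meas G \<and> gry K \<subseteq> gry G" by (rule meas_ignore[OF D e(1,4) m(2)])
        ultimately show ?thesis using K(2) by blast
      qed
    next
      assume a: "exec (Call [Move, Ignore]) H1 Failed \<and> exec (Seq (Call [SetFlag]) Break) H1 res"
      then have "\<forall>K. \<not> apply_rule Move H1 K" "\<forall>K. \<not> apply_rule Ignore H1 K"
        by (auto simp: exec_Call)
      then have tR: "nmark G (tgt G e) = NRed" using moveign_none[OF D e] H1e by simp
      have sf: "apply_rule SetFlag H1 (setN (setE G e ERed) (hd p) NGreen True)"
        using setflag_ex[OF D] H1e by simp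
      have "\<not> exec (Call [SetFlag]) H1 Failed" by (simp only: exec_Call) (use sf in auto)
      with a have "\<exists>K. exec (Call [SetFlag]) H1 (Ok K) \<and> res = Brk K"
        unfolding exec_Seq exec_Break using call_no_brk by blast
      then obtain K where K: "apply_rule SetFlag H1 K" "res = Brk K" by (auto simp: exec_Call)
      then have Ke: "K = setN (setE G e ERed) (hd p) NGreen True" using setflag_app[OF D] H1e by simp
      have "stG K" using flag_case[OF D e(1-3) tR] Ke by simp
      moreover have "gry K \<subseteq> gry G" using Ke gry_green2[OF hR] by simp
      ultimately show ?thesis using K(2) by blast
    qed
  next
    assume a: "exec (Call [NextEdge]) G Failed \<and> exec ?Y G res"
    then have ne: "\<forall>e\<in>E G. src G e = hd p \<longrightarrow> src G e \<noteq> tgt G e \<longrightarrow> emark G e \<noteq> EUnmarked"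
      using nextedge_none[OF D] by (auto simp: exec_Call)
    from a have "\<exists>H2. exec (Try (Call [LoopR]) Skip Skip) G (Ok H2) \<and> exec (Try (Call [Back]) Skip Break) H2 res"
      unfolding exec_Seq using try_call_skip by blast
    then obtain H2 where H2: "exec (Try (Call [LoopR]) Skip Skip) G (Ok H2)"
       "exec (Try (Call [Back]) Skip Break) H2 res" by blast
    from H2(1) have "apply_rule LoopR G H2 \<or> ((\<forall>K. \<not> apply_rule LoopR G K) \<and> H2 = G)"
      unfolding exec_Try exec_Skip using call_no_brk by (auto simp: exec_Call)
    then show ?thesis
    proof
      assume "apply_rule LoopR G H2"
      then obtain e where e: "e \<in> E G" "src G e = tgt G e" "src G e = hd p" and H2e: "H2 = setN G (hd p) NGreen True"
        using loop_app[OF D] by blast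
      have "\<forall>K. \<not> apply_rule Back H2 K" using back_green_none[OF D] H2e by simp
      then have "res = Brk H2" using H2(2) unfolding exec_Try exec_Break using call_no_brk
        by (auto simp: exec_Call)
      moreover have "stG H2" using loop_case[OF D e] H2e by simp
      moreover have "gry H2 \<subseteq> gry G" using H2e gry_green[OF hR] by simp
      ultimately show ?thesis by blast
    next
      assume b: "(\<forall>K. \<not> apply_rule LoopR G K) \<and> H2 = G"
      then have nl: "\<forall>e\<in>E G. src G e = hd p \<longrightarrow> src G e = tgt G e \<longrightarrow> emark G e \<noteq> EUnmarked"
        using loop_none[OF D] by blast
      have out: "\<forall>e'\<in>E G. src G e' = hd p \<longrightarrow> emark G e' \<noteq> EUnmarked" using ne nl by blast
      from H2(2) b have "(\<exists>K. apply_rule Back G K \<and> res = Ok K) \<or> ((\<forall>K. \<not> apply_rule Back G K) \<and> res = Brk G)"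
        unfolding exec_Try exec_Break exec_Skip using call_no_brk by (auto simp: exec_Call)
      then show ?thesis
      proof
        assume "\<exists>K. apply_rule Back G K \<and> res = Ok K"
        then obtain K where K: "apply_rule Back G K" "res = Ok K" by blast
        then obtain e where e: "e \<in> E G" "emark G e = EDashed" "tgt G e = hd p"
          and Ke: "K = setE (setN (setN G (src G e) NRed True) (tgt G e) NBlue False) e EBlue"
          using back_app[OF D] by blast
        have bc: "tl p \<noteq> [] \<and> src G e = hd (tl p) \<and> stD K (tl p)"
          using back_case[OF D e out] unfolding Ke by blast
        then have "src G e \<in> set p" using P(2) by (cases p) auto
        then have "meas K < meas G \<and> gry K \<subseteq> gry G" using meas_back[OF D e] Ke by blast
        then show ?thesis using bc K(2) by blast
      next
        assume c: "(\<forall>K. \<not> apply_rule Back G K) \<and> res = Brk G"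
        then have "tl p = []" using back_none[OF D] by blast
        then have "p = [hd p]" using P(2) by (cases p) auto
        then have "stD G [hd p]" using D by simp
        moreover have "done_at G (hd p)" using out unfolding done_at_def by blast
        ultimately show ?thesis using c by blast
      qed
    qed
  qed
qed

lemma alap_dfs:
  assumes "exec c G res" "c = Alap DFS" "stD G p"
  shows "\<exists>H. res = Ok H \<and> gry H \<subseteq> gry G \<and> (stG H \<or> (\<exists>u. stD H [u] \<and> done_at H u))"
  using assms
proof (induction arbitrary: p rule: exec.induct)
  case (alap_step P G H res)
  then have PD: "P = DFS" by simp
  with dfs_step[OF alap_step.prems(2)] alap_step.hyps(1) obtain p' where
    p': "stD H p'" "gry H \<subseteq> gry G" by blast
  from alap_step.IH(2)[OF alap_step.prems(1) p'(1)] p'(2) show ?case by blast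
next
  case (alap_fail P G)
  then show ?case using dfs_step by blast
next
  case (alap_brk P G H)
  then show ?case using dfs_step by blast
qed auto

lemma term_dfs: "stD G p \<Longrightarrow> terminates (Alap DFS) G"
proof (induction "meas G" arbitrary: G p rule: less_induct)
  case less
  show ?case
  proof (rule terminates.intros(3))
    show "terminates DFS G" by (rule loopfree_term) (simp add: DFS_def)
    show "\<forall>H. exec DFS G (Ok H) \<longrightarrow> terminates (Alap DFS) H"
      using dfs_step[OF less.prems] less.hyps by blast
  qed
qed

definition Body :: cmd where
  "Body = Seq (Call [Init]) (Seq (Alap DFS) (Try (Call [Unroot]) Skip Break))"

lemma is_dag_eq: "is_dag = Seq (Alap Body) Check"
  by (simp add: is_dag_def Body_def)

lemma body_step:
  assumes A: "stA G" and X: "exec Body G res"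
  shows "(\<exists>H. res = Ok H \<and> stA H \<and> gry H \<subset> gry G) \<or> (\<exists>H. res = Brk H \<and> stG H) \<or>
         (res = Failed \<and> gry G = {})"
proof -
  let ?T = "Try (Call [Unroot]) Skip Break"
  from X have "(\<exists>H1. exec (Call [Init]) G (Ok H1) \<and> exec (Seq (Alap DFS) ?T) H1 res) \<or>
     (exec (Call [Init]) G Failed \<and> res = Failed)"
    unfolding Body_def exec_Seq using call_no_brk by blast
  then show ?thesis
  proof
    assume "\<exists>H1. exec (Call [Init]) G (Ok H1) \<and> exec (Seq (Alap DFS) ?T) H1 res"
    then obtain H1 where H1: "apply_rule Init G H1" "exec (Seq (Alap DFS) ?T) H1 res"
      by (auto simp: exec_Call)
    then obtain v where v: "v \<in> V G" "nmark G v = NGrey" "H1 = setN G v NRed True"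
      using init_app[OF A] by blast
    have D1: "stD H1 [v]" using init_case[OF A v(1,2)] v(3) by simp
    have g1: "gry H1 \<subset> gry G" using v unfolding gry_def by auto
    from H1(2) obtain H2 where H2: "exec (Alap DFS) H1 (Ok H2)" "exec ?T H2 res"
      unfolding exec_Seq using alap_dfs[OF _ refl D1] by blast
    from alap_dfs[OF H2(1) refl D1] have g2: "gry H2 \<subseteq> gry H1"
      and c: "stG H2 \<or> (\<exists>u. stD H2 [u] \<and> done_at H2 u)" by auto
    from c show ?thesis
    proof
      assume G2: "stG H2"
      then have "\<forall>K. \<not> apply_rule Unroot H2 K" using unroot_green by blast
      then have "res = Brk H2" using H2(2) unfolding exec_Try exec_Break
        using call_no_brk by (auto simp: exec_Call)
      then show ?thesis using G2 by blast
    next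
      assume "\<exists>u. stD H2 [u] \<and> done_at H2 u"
      then obtain u where u: "stD H2 [u]" "done_at H2 u" by blast
      have "\<not> exec (Call [Unroot]) H2 Failed" using unroot_ex[OF u(1)] by (simp add: exec_Call) blast
      then obtain K where K: "apply_rule Unroot H2 K" "res = Ok K"
        using H2(2) unfolding exec_Try exec_Skip using call_no_brk by (auto simp: exec_Call)
      have Ke: "K = setN H2 u NBlue False" using unroot_app[OF u(1) K(1)] .
      have "stA K" using unroot_case[OF u(1)] u(2) Ke unfolding done_at_def by simp
      moreover have "nmark H2 u = NRed" using stD_parts(4,6)[OF u(1)] by auto
      then have "gry K = gry H2" using Ke unfolding gry_def by auto
      ultimately show ?thesis using K(2) g1 g2 by blast
    qed
  next
    assume a: "exec (Call [Init]) G Failed \<and> res = Failed"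
    then have "\<forall>K. \<not> apply_rule Init G K" by (simp add: exec_Call)
    then have "gry G = {}" unfolding gry_def by (auto simp: apply_rule.simps)
    then show ?thesis using a by blast
  qed
qed

lemma main_loop:
  assumes "exec c G res" "c = Alap Body" "stA G"
  shows "\<exists>H. res = Ok H \<and> ((stA H \<and> gry H = {}) \<or> stG H)"
  using assms
proof (induction rule: exec.induct)
  case (alap_step P G H res)
  then have "P = Body" by simp
  with body_step[OF alap_step.prems(2)] alap_step.hyps(1) have "stA H" by blast
  from alap_step.IH(2)[OF alap_step.prems(1) this] show ?case .
next
  case (alap_fail P G)
  then show ?case using body_step by blast
next
  case (alap_brk P G H)
  then show ?case using body_step by blast
qed auto

lemma term_main: "stA G \<Longrightarrow> terminates (Alap Body) G"
proof (induction "card (gry G)" arbitrary: G rule: less_induct)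
  case less
  have fin: "finite (gry G)" using stA_parts(1)[OF less.prems] unfolding wf_hgraph_def gry_def by auto
  show ?case
  proof (rule terminates.intros(3))
    show "terminates Body G" unfolding Body_def
    proof (rule terminates.intros(2))
      show "terminates (Call [Init]) G" by (rule terminates.intros(1))
      show "\<forall>H. exec (Call [Init]) G (Ok H) \<longrightarrow> terminates (Seq (Alap DFS) (Try (Call [Unroot]) Skip Break)) H"
      proof (intro allI impI)
        fix H assume "exec (Call [Init]) G (Ok H)"
        then obtain v where v: "v \<in> V G" "nmark G v = NGrey" "H = setN G v NRed True"
          using init_app[OF less.prems] by (auto simp: exec_Call)
        have D1: "stD H [v]" using init_case[OF less.prems v(1,2)] v(3) by simp
        show "terminates (Seq (Alap DFS) (Try (Call [Unroot]) Skip Break)) H"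
          by (rule terminates.intros(2)) (auto intro: term_dfs[OF D1] loopfree_term)
      qed
    qed
    show "\<forall>H. exec Body G (Ok H) \<longrightarrow> terminates (Alap Body) H"
    proof (intro allI impI)
      fix H assume "exec Body G (Ok H)"
      then have "stA H" "gry H \<subset> gry G" using body_step[OF less.prems] by auto
      moreover then have "card (gry H) < card (gry G)" using fin by (simp add: psubset_card_mono)
      ultimately show "terminates (Alap Body) H" using less.hyps by blast
    qed
  qed
qed

lemma initial_stA:
  assumes "initial_graph G" shows "stA G"
proof -
  have wf: "wf_hgraph G" and n: "\<forall>v\<in>V G. nmark G v = NGrey \<and> \<not> root G v"
    and m: "\<forall>e\<in>E G. emark G e = EUnmarked" using assms unfolding initial_graph_def by auto
  have sb: "e \<in> E G \<Longrightarrow> nmark G (src G e) \<noteq> NBlue" for e using wf_src[OF wf] n by fastforce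
  then have "BR G = {}" unfolding BR_def by auto
  then show ?thesis unfolding stA_def using wf n m sb by (auto simp: acyclic_def)
qed

lemma check_A: "stA H \<Longrightarrow> exec Check H res \<Longrightarrow> res = Ok H"
  unfolding Check_def exec_IfC exec_Skip using flag_A call_no_brk by (auto simp: exec_Call)

lemma check_G: "stG H \<Longrightarrow> exec Check H res \<Longrightarrow> res = Failed"
proof -
  assume g: "stG H" "exec Check H res"
  have "\<not> exec (Call [Flag]) H Failed" using flag_green[OF g(1)] by (simp add: exec_Call) blast
  then show ?thesis using g(2) unfolding Check_def exec_IfC exec_FailC by blast
qed

lemma final_acyclic:
  assumes "stA H" "gry H = {}"
  shows "acyclic (edge_rel H)"
proof -
  have "\<forall>v\<in>V H. nmark H v = NBlue" using assms unfolding stA_def gry_def by auto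
  then have "BR H = edge_rel H" using stA_parts(1)[OF assms(1)]
    unfolding BR_def edge_rel_def wf_hgraph_def by auto
  then show ?thesis using stA_parts(7)[OF assms(1)] by simp
qed

lemma same_edge_rel: "same G H \<Longrightarrow> edge_rel H = edge_rel G"
  unfolding same_def edge_rel_def by simp

lemma same_iso: "same G H \<Longrightarrow> iso_upto_marks G H"
  unfolding same_def iso_upto_marks_def
  by (rule exI[of _ id], rule exI[of _ id]) (simp add: bij_betw_def)

lemma exec_isdag:
  assumes A: "stA G" and X: "exec is_dag G res"
  shows "\<exists>H. same G H \<and> ((stA H \<and> gry H = {} \<and> res = Ok H) \<or> (stG H \<and> res = Failed))"
proof -
  from X obtain H where H: "exec (Alap Body) G (Ok H)" "exec Check H res"
    unfolding is_dag_eq exec_Seq using main_loop[OF _ refl A] by blast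
  have s: "same G H" using exec_same[OF H(1)] by simp
  from main_loop[OF H(1) refl A] have "(stA H \<and> gry H = {}) \<or> stG H" by simp
  then show ?thesis using check_A check_G H(2) s by blast
qed

theorem mainTheorem4:
  fixes G :: "('v, 'e) hgraph"
  assumes "initial_graph G"
  shows "terminates is_dag G \<and>
    (graph_acyclic G \<longrightarrow>
       \<not> exec is_dag G Failed \<and> (\<exists>H. exec is_dag G (Ok H)) \<and>
       (\<forall>res. exec is_dag G res \<longrightarrow> (\<exists>H. res = Ok H \<and> iso_upto_marks G H))) \<and>
    (\<not> graph_acyclic G \<longrightarrow>
       exec is_dag G Failed \<and> (\<forall>res. exec is_dag G res \<longrightarrow> res = Failed))"
proof -
  have A: "stA G" using initial_stA[OF assms] .
  have T: "terminates is_dag G" unfolding is_dag_eq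
    by (rule terminates.intros(2)) (auto intro: term_main[OF A] loopfree_term simp: Check_def)
  obtain r0 where r0: "exec is_dag G r0" using exec_exists[OF T] by blast
  have R: "\<And>res. exec is_dag G res \<Longrightarrow> (graph_acyclic G \<longrightarrow> (\<exists>H. res = Ok H \<and> iso_upto_marks G H))
       \<and> (\<not> graph_acyclic G \<longrightarrow> res = Failed)"
  proof -
    fix res assume "exec is_dag G res"
    from exec_isdag[OF A this] obtain H where H: "same G H"
      "(stA H \<and> gry H = {} \<and> res = Ok H) \<or> (stG H \<and> res = Failed)" by blast
    have er: "edge_rel H = edge_rel G" by (rule same_edge_rel[OF H(1)])
    from H(2) show "(graph_acyclic G \<longrightarrow> (\<exists>H. res = Ok H \<and> iso_upto_marks G H))
       \<and> (\<not> graph_acyclic G \<longrightarrow> res = Failed)"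
    proof
      assume a: "stA H \<and> gry H = {} \<and> res = Ok H"
      then have "graph_acyclic G" using final_acyclic er unfolding graph_acyclic_def by metis
      then show ?thesis using a same_iso[OF H(1)] by blast
    next
      assume a: "stG H \<and> res = Failed"
      then have "\<not> graph_acyclic G" using er unfolding stG_def graph_acyclic_def by metis
      then show ?thesis using a by blast
    qed
  qed
  show ?thesis
  proof (intro conjI impI allI)
    show "terminates is_dag G" by (rule T)
  next
    assume "graph_acyclic G"
    then show "\<not> exec is_dag G Failed" using R by blast
  next
    assume "graph_acyclic G"
    then show "\<exists>H. exec is_dag G (Ok H)" using R r0 by blast
  next
    fix res assume "graph_acyclic G" "exec is_dag G res"
    then show "\<exists>H. res = Ok H \<and> iso_upto_marks G H" using R by blast
  next
    assume "\<not> graph_acyclic G"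
    then show "exec is_dag G Failed" using R r0 by metis
  next
    fix res assume "\<not> graph_acyclic G" "exec is_dag G res"
    then show "res = Failed" using R by blast
  qed
qed

end
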